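(* Let $\zeta_5=e^{2\pi i/5}$. For every $\tau\in\mathbb{H}^2$, $$\zeta_5\,\theta[\tfrac15;\tfrac15]^5+\zeta_5^3\,\theta[\tfrac35;\tfrac15]^5+\theta[1;\tfrac15]^5-\zeta_5^2\,\theta[\tfrac35;\tfrac95]^5-\zeta_5^4\,\theta[\tfrac15;\tfrac95]^5=0,$$ and $$\zeta_5^3\,\theta[\tfrac15;\tfrac35]^5+\zeta_5^4\,\theta[\tfrac35;\tfrac35]^5+\theta[1;\tfrac35]^5-\zeta_5\,\theta[\tfrac35;\tfrac75]^5-\zeta_5^2\,\theta[\tfrac15;\tfrac75]^5=0.$$
   Context: Let $\mathbb{H}^2=\{\tau\in\mathbb{C}:\Im\tau>0\}$. For a characteristic $(\epsilon,\epsilon')\in\mathbb{R}^2$, the theta function with characteristic is $$\theta[\epsilon;\epsilon'](\zeta,\tau)=\sum_{n\in\mathbb{Z}}\exp\Big(2\pi i\Big[\tfrac12\big(n+\tfrac{\epsilon}{2}\big)^2\tau+\big(n+\tfrac{\epsilon}{2}\big)\big(\zeta+\tfrac{\epsilon'}{2}\big)\Big]\Big),\quad (\zeta,\tau)\in\mathbb{C}\times\mathbb{H}^2,$$ (usually written with the column $\left[\begin{smallmatrix}\epsilon\\ \epsilon'\end{smallmatrix}\right]$), and the theta constant is $\theta[\epsilon;\epsilon']=\theta[\epsilon;\epsilon'](0,\tau)$, regarded as a function of $\tau$. *)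

theory Defs
  imports "HOL-Analysis.Analysis"
begin

text \<open>Theta function with characteristic (eps, eps'), as a sum over all integers n
  (absolutely convergent for Im tau > 0, so the unordered sum infsum is appropriate).\<close>
definition theta_char :: "real \<Rightarrow> real \<Rightarrow> complex \<Rightarrow> complex \<Rightarrow> complex" where
  "theta_char eps eps' z tau =
     (\<Sum>\<^sub>\<infinity> n\<in>(UNIV::int set).
        exp (2 * pi * \<i> * ((1/2) * (of_int n + of_real (eps/2))^2 * tau
                           + (of_int n + of_real (eps/2)) * (z + of_real (eps'/2)))))"

definition theta_const :: "real \<Rightarrow> real \<Rightarrow> complex \<Rightarrow> complex" where
  "theta_const eps eps' tau = theta_char eps eps' 0 tau"

definition zeta5 :: complex where
  "zeta5 = exp (2 * pi * \<i> / 5)"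

end

theory Submission
  imports Defs
begin

definition Tt :: "real \<Rightarrow> real \<Rightarrow> complex \<Rightarrow> int \<Rightarrow> complex" where
 "Tt e e' \<tau> n = exp (2 * pi * \<i> * ((1/2) * (of_int n + of_real (e/2))^2 * \<tau>
                           + (of_int n + of_real (e/2)) * (0 + of_real (e'/2))))"

lemma theta_const_Tt: "theta_const e e' \<tau> = infsum (Tt e e' \<tau>) UNIV"
  unfolding theta_const_def theta_char_def by (rule infsum_cong) (simp add: Tt_def)

lemma norm_Tt: "norm (Tt e e' \<tau> n) = exp (- pi * Im \<tau> * (real_of_int n + e/2)^2)"
proof -
  have "of_int n + of_real (e/2) = (of_real (real_of_int n + e/2) :: complex)" by simp
  then show ?thesis unfolding Tt_def
    by (simp add: power2_eq_square algebra_simps)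
qed

lemma geo_int:
  fixes r :: real assumes "0 \<le> r" "r < 1"
  shows "(\<lambda>n::int. r ^ nat \<bar>n\<bar>) summable_on UNIV"
proof -
  have U: "(UNIV::int set) = range int \<union> range (\<lambda>n. - int n - 1)"
  proof -
    { fix x :: int have "x \<in> range int \<union> range (\<lambda>n. - int n - 1)"
      proof (cases "x \<ge> 0")
        case True then show ?thesis by (metis UnI1 nonneg_int_cases rangeI)
      next
        case False then have "x = - int (nat (-x-1)) - 1" by simp
        then show ?thesis by blast
      qed }
    then show ?thesis by blast
  qed
  have g: "(\<lambda>n::nat. r ^ n) summable_on UNIV"
    by (rule summable_nonneg_imp_summable_on) (use assms in \<open>auto intro: summable_geometric\<close>)
  have g2: "(\<lambda>n::nat. r ^ Suc n) summable_on UNIV"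
    by (rule summable_nonneg_imp_summable_on) (use assms in \<open>auto intro!: summable_mult summable_geometric\<close>)
  have s1: "(\<lambda>n::int. r ^ nat \<bar>n\<bar>) summable_on range int"
    by (subst summable_on_reindex) (use g in \<open>auto simp: o_def\<close>)
  have e: "nat (1 + int n) = Suc n" for n by simp
  have s2: "(\<lambda>n::int. r ^ nat \<bar>n\<bar>) summable_on range (\<lambda>n. - int n - 1)"
    by (subst summable_on_reindex) (use g2 in \<open>auto simp: o_def inj_on_def e\<close>)
  show ?thesis using summable_on_union[OF s1 s2] U by simp
qed

lemma summable_Tt:
  assumes "Im \<tau> > 0"
  shows "(\<lambda>n. norm (Tt e e' \<tau> n)) summable_on (UNIV::int set)"
proof -
  define c where "c = pi * Im \<tau>"
  have c: "c > 0" using assms by (simp add: c_def)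
  define K where "K = exp (c * ((e/2)^2 + 1/2))"
  have "(\<lambda>n::int. K * exp (-c) ^ nat \<bar>n\<bar>) summable_on UNIV"
    by (intro summable_on_cmult_right geo_int) (use c in auto)
  then show ?thesis
  proof (rule summable_on_comparison_test)
    fix n :: int
    have q: "(real_of_int n + e/2)^2 \<ge> \<bar>real_of_int n\<bar> - (e/2)^2 - 1/2"
    proof -
      have a: "2*(real_of_int n + e/2)^2 + 2*(e/2)^2 - (real_of_int n)^2 = (real_of_int n + e)^2"
        by (simp add: power2_eq_square algebra_simps)
      have b: "(real_of_int n)^2/2 - \<bar>real_of_int n\<bar> + 1/2 = (\<bar>real_of_int n\<bar> - 1)^2/2"
        by (simp add: power2_eq_square algebra_simps)
      have "(real_of_int n + e)^2 \<ge> 0" "(\<bar>real_of_int n\<bar> - 1)^2 \<ge> 0" by auto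
      with a b show ?thesis by linarith
    qed
    have "exp (-c) ^ nat \<bar>n\<bar> = exp (- c * \<bar>real_of_int n\<bar>)"
      by (simp add: exp_of_nat_mult[symmetric])
    moreover have "- c * (real_of_int n + e/2)^2 \<le> c * ((e/2)^2 + 1/2) + (- c * \<bar>real_of_int n\<bar>)"
      using mult_left_mono[OF q, of c] c by (simp add: algebra_simps)
    ultimately show "norm (Tt e e' \<tau> n) \<le> K * exp (-c) ^ nat \<bar>n\<bar>"
      unfolding norm_Tt K_def by (simp add: c_def exp_add[symmetric])
  qed auto
qed


lemma prod_PiE_abs_summable:
  fixes f :: "'a \<Rightarrow> 'b \<Rightarrow> complex"
  assumes "finite A" "\<And>a. a \<in> A \<Longrightarrow> (\<lambda>y. norm (f a y)) summable_on B a"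
  shows "(\<lambda>g. norm (\<Prod>a\<in>A. f a (g a))) summable_on PiE A B"
  using assms
proof (induction A rule: finite_induct)
  case empty
  then show ?case by simp
next
  case (insert a F)
  have pi: "PiE (insert a F) B = (\<lambda>(g,y). g(a:=y)) ` (PiE F B \<times> B a)"
    unfolding PiE_insert_eq
    by (subst swap_product [symmetric]) (simp add: image_image case_prod_unfold)
  have inj: "inj_on (\<lambda>(g, y). g(a := y)) (PiE F B \<times> B a)"
    using \<open>a \<notin> F\<close> by (rule inj_combinator')
  have IH: "(\<lambda>g. norm (\<Prod>a\<in>F. f a (g a))) summable_on PiE F B"
    using insert by auto
  have fa: "(\<lambda>y. norm (f a y)) summable_on B a" using insert by auto
  define G where "G = (\<lambda>(p::'a\<Rightarrow>'b, y). norm (f a y) * norm (\<Prod>a\<in>F. f a (p a)))"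
  have "(\<lambda>z. norm (G z)) summable_on Sigma (PiE F B) (\<lambda>_. B a)"
  proof (subst Infinite_Sum.abs_summable_on_Sigma_iff, intro conjI ballI)
    fix p assume "p \<in> PiE F B"
    show "(\<lambda>y. norm (G (p, y))) summable_on B a"
      unfolding G_def by (simp add: abs_mult) (intro summable_on_cmult_left fa)
  next
    have "(\<lambda>p. (\<Sum>\<^sub>\<infinity>y\<in>B a. norm (f a y)) * norm (\<Prod>a\<in>F. f a (p a))) summable_on PiE F B"
      by (intro summable_on_cmult_right IH)
    moreover have "(\<Sum>\<^sub>\<infinity>y\<in>B a. norm (G (p, y))) = (\<Sum>\<^sub>\<infinity>y\<in>B a. norm (f a y)) * norm (\<Prod>a\<in>F. f a (p a))" for p
      unfolding G_def by (simp add: abs_mult infsum_cmult_left')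
    moreover have "(\<Sum>\<^sub>\<infinity>y\<in>B a. norm (G (p, y))) \<ge> 0" for p
      by (simp add: infsum_nonneg)
    ultimately show "(\<lambda>x. norm (\<Sum>\<^sub>\<infinity>y\<in>B a. norm (G (x, y)))) summable_on PiE F B"
      by simp
  qed
  then have "G summable_on (PiE F B \<times> B a)"
    unfolding G_def by (simp add: case_prod_unfold abs_mult)
  moreover have "G = (\<lambda>g. norm (\<Prod>a\<in>insert a F. f a (g a))) \<circ> (\<lambda>(g,y). g(a:=y))"
  proof
    fix z :: "('a \<Rightarrow> 'b) \<times> 'b"
    obtain p y where z: "z = (p, y)" by (cases z)
    have "(\<Prod>x\<in>F. f x ((p(a := y)) x)) = (\<Prod>x\<in>F. f x (p x))"
      by (rule prod.cong) (use insert.hyps in auto)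
    then show "G z = ((\<lambda>g. norm (\<Prod>a\<in>insert a F. f a (g a))) \<circ> (\<lambda>(g,y). g(a:=y))) z"
      unfolding z G_def using insert.hyps by (simp add: norm_mult)
  qed
  ultimately show ?case
    unfolding pi by (subst summable_on_reindex[OF inj]) simp
qed


definition P5 :: "(nat \<Rightarrow> int) set" where "P5 = PiE {..<5} (\<lambda>_. UNIV)"

definition u :: "int \<Rightarrow> complex \<Rightarrow> int \<Rightarrow> complex" where
  "u j \<tau> x = exp (pi * \<i> * \<tau> * of_int (x^2) / 100 + pi * \<i> * of_int j * of_int x / 50)"

definition H :: "int \<Rightarrow> complex \<Rightarrow> (nat \<Rightarrow> int) \<Rightarrow> complex" where
  "H j \<tau> x = exp (2 * pi * \<i> * of_int (j * x 0) / 5) * (\<Prod>i<5. u j \<tau> (x i))"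

definition Lr :: "int \<Rightarrow> (nat \<Rightarrow> int) set" where
  "Lr r = {x \<in> P5. \<forall>i<5. x i mod 10 = r}"

definition epos :: "int \<Rightarrow> (nat \<Rightarrow> int) \<Rightarrow> (nat \<Rightarrow> int)" where
  "epos \<rho> n = restrict (\<lambda>i. 10 * n i + \<rho>) {..<5}"

definition eneg :: "int \<Rightarrow> (nat \<Rightarrow> int) \<Rightarrow> (nat \<Rightarrow> int)" where
  "eneg \<rho> n = restrict (\<lambda>i. - (10 * n i + \<rho>)) {..<5}"

lemma Tt_pos: "Tt (of_int \<rho> / 5) (of_int j / 5) \<tau> n = u j \<tau> (10 * n + \<rho>)"
  unfolding Tt_def u_def
  by (rule arg_cong[where f=exp]) (simp add: field_simps power2_eq_square)

lemma Tt_neg: "Tt (of_int \<rho> / 5) (2 - of_int j / 5) \<tau> n = exp (pi * \<i> * of_int \<rho> / 5) * u j \<tau> (- (10 * n + \<rho>))"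
proof -
  have eq: "2 * pi * \<i> * ((1/2) * (of_int n + of_real (of_int \<rho> / 5/2))^2 * \<tau>
                           + (of_int n + of_real (of_int \<rho> / 5/2)) * (0 + of_real ((2 - of_int j / 5)/2)))
     = (pi * \<i> * of_int \<rho> / 5 + (pi * \<i> * \<tau> * of_int ((- (10 * n + \<rho>))^2) / 100 + pi * \<i> * of_int j * of_int (- (10 * n + \<rho>)) / 50))
       + \<i> * (of_int n * (of_real pi * 2))"
    by (simp add: field_simps power2_eq_square)
  show ?thesis unfolding Tt_def u_def
    by (subst eq, subst exp_plus_2pin, simp only: exp_add)
qed

lemma Lr_P5: "Lr r \<subseteq> P5" by (auto simp: Lr_def)

lemma P5_out: "a \<in> P5 \<Longrightarrow> \<not> i < 5 \<Longrightarrow> a i = undefined"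
  by (rule PiE_arb[of _ "{..<5::nat}" "\<lambda>_. UNIV"]) (auto simp: P5_def)

lemma restrict_P5: "restrict f {..<5} \<in> P5"
  unfolding P5_def restrict_PiE_iff by simp

lemma mod_aux1: assumes "(x::int) mod 10 = r" shows "10 * ((x - r) div 10) + r = x"
proof -
  have "x - r = 10 * (x div 10)" using assms div_mult_mod_eq[of x 10] by linarith
  then show ?thesis by simp
qed

lemma mod_aux2: "0 \<le> (r::int) \<Longrightarrow> r < 10 \<Longrightarrow> (10 * a + r) mod 10 = r"
  by simp

lemma bij_pos:
  assumes "0 \<le> \<rho>" "\<rho> < 10"
  shows "bij_betw (epos \<rho>) P5 (Lr \<rho>)"
proof (rule bij_betw_byWitness[where f'="\<lambda>x. restrict (\<lambda>i. (x i - \<rho>) div 10) {..<5}"])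
  show "\<forall>a\<in>P5. restrict (\<lambda>i. (epos \<rho> a i - \<rho>) div 10) {..<5} = a"
  proof
    fix a assume a: "a \<in> P5"
    show "restrict (\<lambda>i. (epos \<rho> a i - \<rho>) div 10) {..<5} = a"
    proof
      fix i show "restrict (\<lambda>i. (epos \<rho> a i - \<rho>) div 10) {..<5} i = a i"
        using a by (cases "i < 5") (simp_all add: epos_def P5_out)
    qed
  qed
  show "\<forall>a'\<in>Lr \<rho>. epos \<rho> (restrict (\<lambda>i. (a' i - \<rho>) div 10) {..<5}) = a'"
  proof
    fix x assume x: "x \<in> Lr \<rho>"
    then have xP: "x \<in> P5" using Lr_P5 by auto
    show "epos \<rho> (restrict (\<lambda>i. (x i - \<rho>) div 10) {..<5}) = x"
    proof
      fix i show "epos \<rho> (restrict (\<lambda>i. (x i - \<rho>) div 10) {..<5}) i = x i"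
      proof (cases "i < 5")
        case True
        then have "x i mod 10 = \<rho>" using x by (auto simp: Lr_def)
        then show ?thesis using True by (simp add: epos_def mod_aux1)
      next
        case False then show ?thesis using xP by (simp add: epos_def P5_out)
      qed
    qed
  qed
  show "epos \<rho> ` P5 \<subseteq> Lr \<rho>"
    unfolding Lr_def epos_def using assms by (auto simp: restrict_P5 mod_aux2)
  show "(\<lambda>x. restrict (\<lambda>i. (x i - \<rho>) div 10) {..<5}) ` Lr \<rho> \<subseteq> P5"
    using restrict_P5 by blast
qed

lemma mod_aux3: assumes "(x::int) mod 10 = 10 - r" shows "- (10 * ((- x - r) div 10) + r) = x"
proof -
  have e: "- x - r = 10 * (- (x div 10) - 1)" using assms div_mult_mod_eq[of x 10] unfolding right_diff_distrib by linarith
  have d: "(- x - r) div 10 = - (x div 10) - 1" unfolding e by simp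
  have "- (10 * ((- x - r) div 10) + r) = - (10 * (- (x div 10) - 1) + r)" by (simp only: d)
  also have "\<dots> = 10 * (x div 10) + 10 - r" by (simp add: algebra_simps)
  also have "\<dots> = x" using assms div_mult_mod_eq[of x 10] by linarith
  finally show ?thesis .
qed
lemma mod_aux4: assumes "0 < (r::int)" "r < 10" shows "(- (10 * a + r)) mod 10 = 10 - r"
proof -
  have "- (10 * a + r) = (10 - r) + 10 * (- a - 1)" by simp
  then have "(- (10 * a + r)) mod 10 = (10 - r) mod 10" by (simp only: mod_mult_self2)
  also have "\<dots> = 10 - r" by (rule mod_pos_pos_trivial) (use assms in auto)
  finally show ?thesis .
qed

lemma bij_neg:
  assumes "0 < \<rho>" "\<rho> < 10"
  shows "bij_betw (eneg \<rho>) P5 (Lr (10 - \<rho>))"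
proof (rule bij_betw_byWitness[where f'="\<lambda>x. restrict (\<lambda>i. (- x i - \<rho>) div 10) {..<5}"])
  show "\<forall>a\<in>P5. restrict (\<lambda>i. (- eneg \<rho> a i - \<rho>) div 10) {..<5} = a"
  proof
    fix a assume a: "a \<in> P5"
    show "restrict (\<lambda>i. (- eneg \<rho> a i - \<rho>) div 10) {..<5} = a"
    proof
      fix i show "restrict (\<lambda>i. (- eneg \<rho> a i - \<rho>) div 10) {..<5} i = a i"
        using a by (cases "i < 5") (simp_all add: eneg_def P5_out)
    qed
  qed
  show "\<forall>a'\<in>Lr (10 - \<rho>). eneg \<rho> (restrict (\<lambda>i. (- a' i - \<rho>) div 10) {..<5}) = a'"
  proof
    fix x assume x: "x \<in> Lr (10 - \<rho>)"
    then have xP: "x \<in> P5" using Lr_P5 by auto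
    show "eneg \<rho> (restrict (\<lambda>i. (- x i - \<rho>) div 10) {..<5}) = x"
    proof
      fix i show "eneg \<rho> (restrict (\<lambda>i. (- x i - \<rho>) div 10) {..<5}) i = x i"
      proof (cases "i < 5")
        case True
        then have "x i mod 10 = 10 - \<rho>" using x by (auto simp: Lr_def)
        then show ?thesis using True mod_aux3[of "x i" \<rho>] by (simp add: eneg_def)
      next
        case False then show ?thesis using xP by (simp add: eneg_def P5_out)
      qed
    qed
  qed
  show "eneg \<rho> ` P5 \<subseteq> Lr (10 - \<rho>)"
    unfolding Lr_def eneg_def using assms mod_aux4[OF assms] by (auto simp del: minus_add_distrib simp: restrict_P5)
  show "(\<lambda>x. restrict (\<lambda>i. (- x i - \<rho>) div 10) {..<5}) ` Lr (10 - \<rho>) \<subseteq> P5"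
    using restrict_P5 by blast
qed


lemma H_pos:
  assumes "0 \<le> \<rho>" "\<rho> < 10" "Im \<tau> > 0"
  shows "H j \<tau> summable_on Lr \<rho>"
    and "infsum (H j \<tau>) (Lr \<rho>) = exp (2*pi*\<i>* of_int (j*\<rho>)/5) * theta_const (of_int \<rho>/5) (of_int j/5) \<tau> ^ 5"
proof -
  define c where "c = exp (2*pi*\<i>* of_int (j*\<rho>)/5)"
  define f where "f = (\<lambda>(i::nat) n. Tt (of_int \<rho>/5) (of_int j/5) \<tau> n)"
  have eq: "H j \<tau> (epos \<rho> n) = c * (\<Prod>i\<in>{..<5}. f i (n i))" for n
  proof -
    have "(\<Prod>i<5. u j \<tau> (epos \<rho> n i)) = (\<Prod>i<5. f i (n i))"
      by (rule prod.cong) (simp_all add: epos_def f_def Tt_pos)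
    moreover have "exp (2*pi*\<i>* of_int (j * epos \<rho> n 0)/5) = c"
    proof -
      have "2*pi*\<i>* of_int (j * epos \<rho> n 0)/5 = 2*pi*\<i>* of_int (j*\<rho>)/5 + \<i> * (of_int (2*j*n 0) * (of_real pi * 2))"
        by (simp add: epos_def field_simps)
      then show ?thesis unfolding c_def by (simp only: exp_plus_2pin)
    qed
    ultimately show ?thesis by (simp add: H_def)
  qed
  have sf: "(\<lambda>n. norm (f i n)) summable_on UNIV" for i using summable_Tt assms by (simp add: f_def)
  have summ: "(\<lambda>n. c * (\<Prod>i\<in>{..<5}. f i (n i))) summable_on P5"
    unfolding P5_def by (rule summable_on_cmult_right, rule abs_summable_summable, rule prod_PiE_abs_summable) (auto intro: sf)
  have bij: "bij_betw (epos \<rho>) P5 (Lr \<rho>)" using bij_pos assms by auto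
  show "H j \<tau> summable_on Lr \<rho>"
    using summable_on_reindex_bij_betw[OF bij, of "H j \<tau>"] summ by (simp add: eq)
  have "infsum (H j \<tau>) (Lr \<rho>) = infsum (\<lambda>n. H j \<tau> (epos \<rho> n)) P5"
    by (rule infsum_reindex_bij_betw[OF bij, symmetric])
  also have "\<dots> = infsum (\<lambda>n. c * (\<Prod>i\<in>{..<5}. f i (n i))) P5" by (simp add: eq)
  also have "\<dots> = c * infsum (\<lambda>n. \<Prod>i\<in>{..<5}. f i (n i)) P5" by (rule infsum_cmult_right')
  also have "infsum (\<lambda>n. \<Prod>i\<in>{..<5}. f i (n i)) P5 = (\<Prod>i\<in>{..<5}. infsum (f i) UNIV)"
    unfolding P5_def by (rule infsum_prod_PiE_abs) (auto intro: sf)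
  also have "\<dots> = theta_const (of_int \<rho>/5) (of_int j/5) \<tau> ^ 5"
    by (simp add: f_def theta_const_Tt)
  finally show "infsum (H j \<tau>) (Lr \<rho>) = exp (2*pi*\<i>* of_int (j*\<rho>)/5) * theta_const (of_int \<rho>/5) (of_int j/5) \<tau> ^ 5"
    by (simp add: c_def)
qed

lemma u_neg: "u j \<tau> (- (10 * n + \<rho>)) = exp (- (pi * \<i> * of_int \<rho> / 5)) * Tt (of_int \<rho> / 5) (2 - of_int j / 5) \<tau> n"
proof -
  have "exp (- (pi * \<i> * of_int \<rho> / 5)) * exp (pi * \<i> * of_int \<rho> / 5) = 1"
    by (simp add: exp_add[symmetric])
  then show ?thesis by (simp only: Tt_neg mult.assoc[symmetric]) simp
qed

lemma H_neg:
  assumes "0 < \<rho>" "\<rho> < 10" "odd \<rho>" "Im \<tau> > 0"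
  shows "H j \<tau> summable_on Lr (10 - \<rho>)"
    and "infsum (H j \<tau>) (Lr (10 - \<rho>)) = - exp (2*pi*\<i>* of_int (- (j*\<rho>))/5) * theta_const (of_int \<rho>/5) (2 - of_int j/5) \<tau> ^ 5"
proof -
  define c where "c = - exp (2*pi*\<i>* of_int (- (j*\<rho>))/5)"
  define f where "f = (\<lambda>(i::nat) n. Tt (of_int \<rho>/5) (2 - of_int j/5) \<tau> n)"
  define e where "e = exp (- (pi * \<i> * of_int \<rho> / 5))"
  obtain m where m: "\<rho> = 2*m+1" using assms(3) oddE by blast
  have eq: "H j \<tau> (eneg \<rho> n) = c * (\<Prod>i\<in>{..<5}. f i (n i))" for n
  proof -
    have "(\<Prod>i<5. u j \<tau> (eneg \<rho> n i)) = (\<Prod>i<5. e * f i (n i))"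
      by (rule prod.cong) (simp_all add: eneg_def f_def u_neg e_def del: minus_add_distrib)
    also have "\<dots> = e^5 * (\<Prod>i<5. f i (n i))" by (simp add: prod.distrib)
    finally have p: "(\<Prod>i<5. u j \<tau> (eneg \<rho> n i)) = e^5 * (\<Prod>i<5. f i (n i))" .
    have "exp (2*pi*\<i>* of_int (j * eneg \<rho> n 0)/5) * e^5 = c"
    proof -
      have "exp (2*pi*\<i>* of_int (j * eneg \<rho> n 0)/5) * e^5
          = exp (2*pi*\<i>* of_int (j * eneg \<rho> n 0)/5 + of_nat 5 * (- (pi * \<i> * of_int \<rho> / 5)))"
        unfolding e_def by (simp only: exp_add exp_of_nat_mult)
      also have "2*pi*\<i>* of_int (j * eneg \<rho> n 0)/5 + of_nat 5 * (- (pi * \<i> * of_int \<rho> / 5))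
          = (2*pi*\<i>* of_int (- (j*\<rho>))/5 + of_real pi * \<i>) + \<i> * (of_int (- 2*j*n 0 - m - 1) * (of_real pi * 2))"
        by (simp add: eneg_def m field_simps)
      also have "exp \<dots> = c" unfolding c_def by (subst exp_plus_2pin, subst exp_add, simp)
      finally show ?thesis .
    qed
    then show ?thesis using p by (simp add: H_def)
  qed
  have sf: "(\<lambda>n. norm (f i n)) summable_on UNIV" for i using summable_Tt assms by (simp add: f_def)
  have summ: "(\<lambda>n. c * (\<Prod>i\<in>{..<5}. f i (n i))) summable_on P5"
    unfolding P5_def by (rule summable_on_cmult_right, rule abs_summable_summable, rule prod_PiE_abs_summable) (auto intro: sf)
  have bij: "bij_betw (eneg \<rho>) P5 (Lr (10 - \<rho>))" using bij_neg assms by auto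
  show "H j \<tau> summable_on Lr (10 - \<rho>)"
    using summable_on_reindex_bij_betw[OF bij, of "H j \<tau>"] summ by (simp add: eq)
  have "infsum (H j \<tau>) (Lr (10 - \<rho>)) = infsum (\<lambda>n. H j \<tau> (eneg \<rho> n)) P5"
    by (rule infsum_reindex_bij_betw[OF bij, symmetric])
  also have "\<dots> = infsum (\<lambda>n. c * (\<Prod>i\<in>{..<5}. f i (n i))) P5" by (simp add: eq)
  also have "\<dots> = c * infsum (\<lambda>n. \<Prod>i\<in>{..<5}. f i (n i)) P5" by (rule infsum_cmult_right')
  also have "infsum (\<lambda>n. \<Prod>i\<in>{..<5}. f i (n i)) P5 = (\<Prod>i\<in>{..<5}. infsum (f i) UNIV)"
    unfolding P5_def by (rule infsum_prod_PiE_abs) (auto intro: sf)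
  also have "\<dots> = theta_const (of_int \<rho>/5) (2 - of_int j/5) \<tau> ^ 5"
    by (simp add: f_def theta_const_Tt)
  finally show "infsum (H j \<tau>) (Lr (10 - \<rho>)) = - exp (2*pi*\<i>* of_int (- (j*\<rho>))/5) * theta_const (of_int \<rho>/5) (2 - of_int j/5) \<tau> ^ 5"
    by (simp add: c_def)
qed


definition R5 :: "int set" where "R5 = {1,3,5,7,9}"
definition Lall :: "(nat \<Rightarrow> int) set" where "Lall = (\<Union>r\<in>R5. Lr r)"
definition gmap :: "(nat \<Rightarrow> int) \<Rightarrow> (nat \<Rightarrow> int)" where
  "gmap x = restrict (\<lambda>i. x i - 2 * ((\<Sum>k<5. x k) div 5)) {..<5}"

lemma gmap_apply: "i < 5 \<Longrightarrow> gmap x i = x i - 2 * ((\<Sum>k<5. x k) div 5)"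
  by (simp add: gmap_def)

lemma sum5: "(\<Sum>i<(5::nat). f i) = f 0 + f 1 + f 2 + f 3 + (f 4 :: 'a::comm_monoid_add)"
  by (simp add: numeral_eq_Suc lessThan_Suc add_ac)

lemma prod5: "(\<Prod>i<(5::nat). f i) = f 0 * f 1 * f 2 * f 3 * (f 4 :: 'a::comm_monoid_mult)"
  by (simp add: numeral_eq_Suc lessThan_Suc mult_ac)

lemma odd_R5: "r \<in> R5 \<Longrightarrow> odd r" by (auto simp: R5_def)

lemma R5_I: assumes "0 \<le> r" "r < 10" "odd (r::int)" shows "r \<in> R5"
proof -
  obtain s where s: "r = 2 * s + 1" using assms(3) oddE by blast
  then have "s \<in> {0..4}" using assms by auto
  then have "s = 0 \<or> s = 1 \<or> s = 2 \<or> s = 3 \<or> s = 4" by auto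
  then show ?thesis using s by (auto simp: R5_def)
qed

lemma Lall_D:
  assumes "x \<in> Lall"
  obtains r where "x \<in> P5" "odd r" "\<And>i. i < 5 \<Longrightarrow> x i mod 10 = r"
  using assms by (auto simp: Lall_def Lr_def dest: odd_R5)

lemma sum_struct:
  fixes x :: "nat \<Rightarrow> int"
  assumes "\<And>i. i < 5 \<Longrightarrow> x i mod 10 = r" "odd r"
  shows "\<exists>K. (\<Sum>k<5. x k) = 5 * K \<and> odd K"
proof -
  have e: "x i = 10 * (x i div 10) + r" if "i < 5" for i
    using assms(1)[OF that] div_mult_mod_eq[of "x i" 10] by linarith
  define q where "q = (\<Sum>k<5. x k div 10)"
  have "(\<Sum>k<5. x k) = (\<Sum>k<5. 10 * (x k div 10) + r)"
    by (rule sum.cong) (use e in auto)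
  also have "\<dots> = 10 * q + 5 * r" by (simp add: sum.distrib sum_distrib_left q_def)
  finally have "(\<Sum>k<5. x k) = 5 * (2 * q + r)" by simp
  moreover have "odd (2 * q + r)" using assms(2) by simp
  ultimately show ?thesis by blast
qed

lemma gmap_props:
  assumes "x \<in> Lall"
  shows "gmap x \<in> Lall" "gmap (gmap x) = x"
    "\<exists>K. odd K \<and> (\<Sum>k<5. x k) = 5 * K \<and> (\<forall>i<5. gmap x i = x i - 2 * K)"
proof -
  obtain r where xP: "x \<in> P5" and r: "odd r" and xr: "\<And>i. i < 5 \<Longrightarrow> x i mod 10 = r"
    using Lall_D[OF assms] by blast
  have "\<exists>K. (\<Sum>k<5. x k) = 5 * K \<and> odd K" by (rule sum_struct) (use xr r in auto)
  then obtain K where S: "(\<Sum>k<5. x k) = 5 * K" and K: "odd K" by blast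
  have g: "gmap x i = x i - 2 * K" if "i < 5" for i
    using that by (simp add: gmap_def S)
  show "\<exists>K. odd K \<and> (\<Sum>k<5. x k) = 5 * K \<and> (\<forall>i<5. gmap x i = x i - 2 * K)"
    using S K g by blast
  define r' where "r' = (r - 2 * K) mod 10"
  have r'1: "0 \<le> r'" "r' < 10" by (simp_all add: r'_def)
  have "odd r'"
  proof -
    have "r - 2 * K = 10 * ((r - 2 * K) div 10) + r'"
      unfolding r'_def using div_mult_mod_eq[of "r - 2*K" 10] by linarith
    moreover have "odd (r - 2 * K)" using r by simp
    ultimately show ?thesis by (metis even_add even_mult_iff even_numeral)
  qed
  then have r'R: "r' \<in> R5" using R5_I r'1 by blast
  have "gmap x \<in> Lr r'"
  proof -
    have "gmap x i mod 10 = r'" if "i < 5" for i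
    proof -
      have "gmap x i mod 10 = (x i - 2 * K) mod 10" using g[OF that] by simp
      also have "\<dots> = (x i mod 10 - 2 * K) mod 10" by (simp add: mod_diff_left_eq)
      finally show ?thesis using xr[OF that] r'_def by simp
    qed
    then show ?thesis by (auto simp: Lr_def gmap_def restrict_P5)
  qed
  then show "gmap x \<in> Lall" using r'R by (auto simp: Lall_def)
  have S2: "(\<Sum>k<5. gmap x k) = 5 * (- K)"
  proof -
    have "(\<Sum>k<5. gmap x k) = (\<Sum>k<5. x k - 2 * K)" by (rule sum.cong) (auto simp: g)
    also have "\<dots> = 5 * (- K)" using S by (simp add: sum_subtractf)
    finally show ?thesis .
  qed
  show "gmap (gmap x) = x"
  proof
    fix i show "gmap (gmap x) i = x i"
    proof (cases "i < 5")
      case True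
      have "gmap (gmap x) i = gmap x i - 2 * ((\<Sum>k<5. gmap x k) div 5)" by (rule gmap_apply[OF True])
      also have "\<dots> = x i" using S2 g[OF True] by simp
      finally show ?thesis .
    next
      case False then show ?thesis using xP by (simp add: gmap_def P5_out)
    qed
  qed
qed

lemma prod_u: "finite A \<Longrightarrow> (\<Prod>i\<in>A. u j \<tau> (y i)) =
   exp (pi * \<i> * \<tau> * of_int (\<Sum>i\<in>A. (y i)^2) / 100 + pi * \<i> * of_int j * of_int (\<Sum>i\<in>A. y i) / 50)"
proof (induction A rule: finite_induct)
  case empty then show ?case by simp
next
  case (insert a F)
  have "(\<Prod>i\<in>insert a F. u j \<tau> (y i)) = u j \<tau> (y a) * (\<Prod>i\<in>F. u j \<tau> (y i))" using insert by simp
  also have "\<dots> = exp ((pi * \<i> * \<tau> * of_int ((y a)^2) / 100 + pi * \<i> * of_int j * of_int (y a) / 50)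
      + (pi * \<i> * \<tau> * of_int (\<Sum>i\<in>F. (y i)^2) / 100 + pi * \<i> * of_int j * of_int (\<Sum>i\<in>F. y i) / 50))"
    unfolding insert.IH by (unfold u_def, rule exp_add[symmetric])
  also have "(pi * \<i> * \<tau> * of_int ((y a)^2) / 100 + pi * \<i> * of_int j * of_int (y a) / 50)
      + (pi * \<i> * \<tau> * of_int (\<Sum>i\<in>F. (y i)^2) / 100 + pi * \<i> * of_int j * of_int (\<Sum>i\<in>F. y i) / 50)
      = pi * \<i> * \<tau> * of_int (\<Sum>i\<in>insert a F. (y i)^2) / 100 + pi * \<i> * of_int j * of_int (\<Sum>i\<in>insert a F. y i) / 50"
    using insert.hyps by (simp add: distrib_left distrib_right add_divide_distrib)
  finally show ?case .
qed

lemma H_alt: "H j \<tau> x = exp (2 * pi * \<i> * of_int (j * x 0) / 5) *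
   exp (pi * \<i> * \<tau> * of_int (\<Sum>i<5. (x i)^2) / 100 + pi * \<i> * of_int j * of_int (\<Sum>i<5. x i) / 50)"
  by (simp add: H_def prod_u)

lemma H_flip:
  assumes "x \<in> Lall" "odd j"
  shows "H j \<tau> (gmap x) = - H j \<tau> x"
proof -
  obtain K where K: "odd K" and S: "(\<Sum>k<5. x k) = 5 * K" and g: "\<And>i. i < 5 \<Longrightarrow> gmap x i = x i - 2 * K"
    using gmap_props(3)[OF assms(1)] by blast
  have S': "(\<Sum>k<5. gmap x k) = - 5 * K"
  proof -
    have "(\<Sum>k<5. gmap x k) = (\<Sum>k<5. x k - 2 * K)" by (rule sum.cong) (auto simp: g)
    also have "\<dots> = - 5 * K" using S by (simp add: sum_subtractf)
    finally show ?thesis .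
  qed
  have Q': "(\<Sum>k<5. (gmap x k)^2) = (\<Sum>k<5. (x k)^2)"
  proof -
    have "(\<Sum>k<5. (gmap x k)^2) = (\<Sum>k<5. (x k - 2 * K)^2)" by (rule sum.cong) (auto simp: g)
    also have "\<dots> = (\<Sum>k<5. (x k)^2) - 4 * K * (\<Sum>k<5. x k) + 20 * K^2"
      by (simp add: sum5 power2_eq_square algebra_simps)
    finally show ?thesis using S by (simp add: power2_eq_square)
  qed
  have "odd (j * K)" using assms(2) K by simp
  then obtain M where M: "j * K = 2 * M + 1" by (rule oddE)
  define Q where "Q = (\<Sum>k<5. (x k)^2)"
  define A where "A = 2 * pi * \<i> * of_int (j * x 0) / 5 + (pi * \<i> * \<tau> * of_int Q / 100 + pi * \<i> * of_int j * of_int (5 * K) / 50)"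
  have jk: "(of_int (j * K) :: complex) = 2 * of_int M + 1" using M by simp
  have "2 * pi * \<i> * of_int (j * (x 0 - 2 * K)) / 5 + (pi * \<i> * \<tau> * of_int Q / 100 + pi * \<i> * of_int j * of_int (- 5 * K) / 50)
        = A - pi * \<i> * of_int (j * K)"
    unfolding A_def by (simp add: field_simps)
  also have "\<dots> = (A + of_real pi * \<i>) + \<i> * (of_int (- M - 1) * (of_real pi * 2))"
    unfolding jk by (simp add: algebra_simps)
  finally have ex: "2 * pi * \<i> * of_int (j * (x 0 - 2 * K)) / 5 + (pi * \<i> * \<tau> * of_int Q / 100 + pi * \<i> * of_int j * of_int (- 5 * K) / 50)
        = (A + of_real pi * \<i>) + \<i> * (of_int (- M - 1) * (of_real pi * 2))" .
  have "H j \<tau> (gmap x) = exp (2 * pi * \<i> * of_int (j * (x 0 - 2 * K)) / 5 + (pi * \<i> * \<tau> * of_int Q / 100 + pi * \<i> * of_int j * of_int (- 5 * K) / 50))"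
    unfolding H_alt S' Q' Q_def by (simp add: g exp_add)
  also have "\<dots> = - exp A" unfolding ex by (subst exp_plus_2pin, subst exp_add, simp)
  also have "exp A = H j \<tau> x"
    unfolding H_alt S Q_def A_def by (simp add: exp_add)
  finally show ?thesis .
qed

lemma bij_gmap: "bij_betw gmap Lall Lall"
  by (rule bij_betw_byWitness[where f'=gmap]) (auto simp: gmap_props)

lemma infsum_Lall_zero:
  assumes "odd j"
  shows "infsum (H j \<tau>) Lall = 0"
proof -
  have "infsum (H j \<tau>) Lall = infsum (\<lambda>x. H j \<tau> (gmap x)) Lall"
    by (rule infsum_reindex_bij_betw[OF bij_gmap, symmetric])
  also have "\<dots> = infsum (\<lambda>x. - H j \<tau> x) Lall"
    by (rule infsum_cong) (simp add: H_flip assms)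
  also have "\<dots> = - infsum (H j \<tau>) Lall" by (rule infsum_uminus)
  finally show ?thesis by simp
qed


lemma zeta_exp: "exp (2 * pi * \<i> * of_int a / 5) = zeta5 ^ nat (a mod 5)"
proof -
  have m: "0 \<le> a mod 5" by simp
  have ha: "(of_int a :: complex) = 5 * of_int (a div 5) + of_int (a mod 5)"
  proof -
    have "(of_int a :: complex) = of_int (5 * (a div 5) + a mod 5)" by simp
    also have "\<dots> = 5 * of_int (a div 5) + of_int (a mod 5)" by (simp only: of_int_add of_int_mult of_int_numeral)
    finally show ?thesis .
  qed
  have hn: "(of_nat (nat (a mod 5)) :: complex) = of_int (a mod 5)" using m by simp
  have "2 * pi * \<i> * of_int a / 5 = of_nat (nat (a mod 5)) * (2 * pi * \<i> / 5) + \<i> * (of_int (a div 5) * (of_real pi * 2))"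
    unfolding hn ha by (simp add: field_simps)
  then have "exp (2 * pi * \<i> * of_int a / 5) = exp (of_nat (nat (a mod 5)) * (2 * pi * \<i> / 5))"
    by (simp only: exp_plus_2pin)
  also have "\<dots> = zeta5 ^ nat (a mod 5)" unfolding zeta5_def by (rule exp_of_nat_mult)
  finally show ?thesis .
qed

lemma Lr_disj: assumes "r \<noteq> r'" shows "Lr r \<inter> Lr r' = {}"
proof (rule ccontr)
  assume "Lr r \<inter> Lr r' \<noteq> {}"
  then obtain x where x1: "x \<in> Lr r" and x2: "x \<in> Lr r'" by blast
  from x1 have "\<forall>i<5. x i mod 10 = r" by (simp add: Lr_def)
  then have a: "x 0 mod 10 = r" by simp
  from x2 have "\<forall>i<5. x i mod 10 = r'" by (simp add: Lr_def)
  then have "x 0 mod 10 = r'" by simp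
  with a have "r = r'" by simp
  with assms show False by simp
qed

lemma main_j:
  assumes "odd j" "Im \<tau> > 0"
  shows "zeta5 ^ nat (j mod 5) * theta_const (1/5) (of_int j/5) \<tau> ^ 5
       + zeta5 ^ nat ((j*3) mod 5) * theta_const (3/5) (of_int j/5) \<tau> ^ 5
       + theta_const 1 (of_int j/5) \<tau> ^ 5
       - zeta5 ^ nat ((- (j*3)) mod 5) * theta_const (3/5) (2 - of_int j/5) \<tau> ^ 5
       - zeta5 ^ nat ((- j) mod 5) * theta_const (1/5) (2 - of_int j/5) \<tau> ^ 5 = 0"
proof -
  note p1 = H_pos[where \<rho>=1 and j=j and \<tau>=\<tau>, unfolded zeta_exp]
  note p3 = H_pos[where \<rho>=3 and j=j and \<tau>=\<tau>, unfolded zeta_exp]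
  note p5 = H_pos[where \<rho>=5 and j=j and \<tau>=\<tau>, unfolded zeta_exp]
  note n3 = H_neg[where \<rho>=3 and j=j and \<tau>=\<tau>, unfolded zeta_exp]
  note n1 = H_neg[where \<rho>=1 and j=j and \<tau>=\<tau>, unfolded zeta_exp]
  have s: "H j \<tau> summable_on Lr r" if "r \<in> R5" for r
    using that p1(1) p3(1) p5(1) n3(1) n1(1) assms by (auto simp: R5_def)
  have "(\<Sum>r\<in>R5. infsum (H j \<tau>) (Lr r)) = infsum (H j \<tau>) Lall"
    unfolding Lall_def by (rule sum_infsum) (auto simp: R5_def s Lr_disj)
  also have "\<dots> = 0" using infsum_Lall_zero assms by simp
  finally have z: "(\<Sum>r\<in>R5. infsum (H j \<tau>) (Lr r)) = 0" .
  have "(\<Sum>r\<in>R5. infsum (H j \<tau>) (Lr r)) = infsum (H j \<tau>) (Lr 1) + infsum (H j \<tau>) (Lr 3)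
     + infsum (H j \<tau>) (Lr 5) + infsum (H j \<tau>) (Lr 7) + infsum (H j \<tau>) (Lr 9)"
    by (simp add: R5_def)
  also have "\<dots> = zeta5 ^ nat (j mod 5) * theta_const (1/5) (of_int j/5) \<tau> ^ 5
       + zeta5 ^ nat ((j*3) mod 5) * theta_const (3/5) (of_int j/5) \<tau> ^ 5
       + theta_const 1 (of_int j/5) \<tau> ^ 5
       - zeta5 ^ nat ((- (j*3)) mod 5) * theta_const (3/5) (2 - of_int j/5) \<tau> ^ 5
       - zeta5 ^ nat ((- j) mod 5) * theta_const (1/5) (2 - of_int j/5) \<tau> ^ 5"
    using p1(2) p3(2) p5(2) n3(2) n1(2) assms by simp
  finally show ?thesis using z by simp
qed


theorem theorem3p2:
  fixes \<tau> :: complex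
  assumes "Im \<tau> > 0"
  shows "zeta5 * theta_const (1/5) (1/5) \<tau> ^ 5 + zeta5 ^ 3 * theta_const (3/5) (1/5) \<tau> ^ 5
           + theta_const 1 (1/5) \<tau> ^ 5 - zeta5 ^ 2 * theta_const (3/5) (9/5) \<tau> ^ 5
           - zeta5 ^ 4 * theta_const (1/5) (9/5) \<tau> ^ 5 = 0 \<and>
         zeta5 ^ 3 * theta_const (1/5) (3/5) \<tau> ^ 5 + zeta5 ^ 4 * theta_const (3/5) (3/5) \<tau> ^ 5
           + theta_const 1 (3/5) \<tau> ^ 5 - zeta5 * theta_const (3/5) (7/5) \<tau> ^ 5
           - zeta5 ^ 2 * theta_const (1/5) (7/5) \<tau> ^ 5 = 0"
proof
  have e1: "real_of_int 1 / 5 = 1/5" "(2::real) - real_of_int 1 / 5 = 9/5" by simp_all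
  have n1: "nat (1 mod 5) = 1" "nat ((1*3) mod 5) = 3" "nat ((- (1*3)) mod 5) = 2" "nat ((- 1) mod 5) = 4"
    by simp_all
  show "zeta5 * theta_const (1/5) (1/5) \<tau> ^ 5 + zeta5 ^ 3 * theta_const (3/5) (1/5) \<tau> ^ 5
           + theta_const 1 (1/5) \<tau> ^ 5 - zeta5 ^ 2 * theta_const (3/5) (9/5) \<tau> ^ 5
           - zeta5 ^ 4 * theta_const (1/5) (9/5) \<tau> ^ 5 = 0"
    using main_j[of 1 \<tau>, unfolded e1 n1] assms by simp
next
  have e3: "real_of_int 3 / 5 = 3/5" "(2::real) - real_of_int 3 / 5 = 7/5" by simp_all
  have n3: "nat (3 mod 5) = 3" "nat ((3*3) mod 5) = 4" "nat ((- (3*3)) mod 5) = 1" "nat ((- 3) mod 5) = 2"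
    by simp_all
  show "zeta5 ^ 3 * theta_const (1/5) (3/5) \<tau> ^ 5 + zeta5 ^ 4 * theta_const (3/5) (3/5) \<tau> ^ 5
           + theta_const 1 (3/5) \<tau> ^ 5 - zeta5 * theta_const (3/5) (7/5) \<tau> ^ 5
           - zeta5 ^ 2 * theta_const (1/5) (7/5) \<tau> ^ 5 = 0"
    using main_j[of 3 \<tau>, unfolded e3 n3] assms by simp
qed

end
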